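(* Let $p$ be an odd prime, $R=F_p+vF_p$ with $v^2=v$, $\theta=\lambda+v\mu$ ($\lambda,\mu\in F_p$) a unit of $R$, and let $C$ be a $\theta$-constacyclic code of length $n$ over $R$ with generating set in standard form $\{vg_{1-v}(x),(1-v)g_v(x)\}$. Then: (1) $C^\perp=\langle vh_{1-v}^*(x),(1-v)h_v^*(x)\rangle$ and $|C^\perp|=p^{\deg(g_{1-v}(x))+\deg(g_v(x))}$; (2) $C^\perp=\langle vh_{1-v}^*(x)+(1-v)h_v^*(x)\rangle$; (3) $\phi_\theta(C^\perp)\subseteq\langle h_{1-v}^*(x)h_v^*(x)\rangle$.
   Context: A $\theta$-constacyclic code of length $n$ over $R$ is an $R$-submodule of $R^n$ closed under $(c_0,\dots,c_{n-1})\mapsto(\theta c_{n-1},c_0,\dots,c_{n-2})$, identified with an ideal of $R[x]/\langle x^n-\theta\rangle$ via $(c_i)\mapsto\sum c_ix^i$ (and likewise $C^\perp$, a $\theta^{-1}$-constacyclic code, with an ideal of $R[x]/\langle x^n-\theta^{-1}\rangle$); $\langle\cdot\rangle$ denotes the generated ideal. $C^\perp$ is the dual with respect to the standard Euclidean inner product on $R^n$. A set $\{vg_1(x),(1-v)g_2(x)\}$ is a generating set in standard form for $C$ if it generates $C$, each $g_i\in F_p[x]$ is monic or $0$, $g_1\mid x^n-(\lambda+\mu)$ if $g_1\ne0$, and $g_2\mid x^n-\lambda$ if $g_2\ne0$. Let $h_{1-v}(x),h_v(x)\in F_p[x]$ be defined by $g_{1-v}(x)h_{1-v}(x)=x^n-(\lambda+\mu)$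 and $g_v(x)h_v(x)=x^n-\lambda$; for $h\in\{h_{1-v},h_v\}$ put $\widetilde h(x)=x^{\deg h}h(1/x)$ and $h^*(x)=\frac{1}{h(0)}\widetilde h(x)$. The polynomial Gray map $\phi_\theta$ sends $f(x)=r(x)+vq(x)$ ($r,q\in F_p[x]$ of degree $<n$) to $\lambda(\lambda+\mu)q(x)+x^n[-\mu r(x)-(\lambda+\mu)q(x)]\in F_p[x]/\langle x^{2n}-1\rangle$. *)

theory Defs
  imports "HOL-Computational_Algebra.Polynomial" "HOL-Library.Cardinality"
begin

text \<open>The ring R = F + vF with v^2 = v. The element VR r q stands for r + v q.\<close>
datatype 'a vr = VR (vr_r: 'a) (vr_q: 'a)

instantiation vr :: (comm_ring_1) comm_ring_1
begin
definition zero_vr where "0 = VR 0 0"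
definition one_vr where "1 = VR 1 0"
definition plus_vr where "x + y = VR (vr_r x + vr_r y) (vr_q x + vr_q y)"
definition minus_vr where "x - y = VR (vr_r x - vr_r y) (vr_q x - vr_q y)"
definition uminus_vr where "- x = VR (- vr_r x) (- vr_q x)"
definition times_vr where
  "x * y = VR (vr_r x * vr_r y) (vr_r x * vr_q y + vr_q x * vr_r y + vr_q x * vr_q y)"
instance
proof
  fix a b c :: "'a vr"
  show "a * b * c = a * (b * c)"
    by (cases a; cases b; cases c) (simp add: times_vr_def algebra_simps)
  show "a * b = b * a"
    by (cases a; cases b) (simp add: times_vr_def algebra_simps)
  show "1 * a = a" by (cases a) (simp add: times_vr_def one_vr_def)
  show "a + b + c = a + (b + c)" by (simp add: plus_vr_def algebra_simps)
  show "a + b = b + a" by (simp add: plus_vr_def algebra_simps)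
  show "0 + a = a" by (cases a) (simp add: plus_vr_def zero_vr_def)
  show "- a + a = 0" by (simp add: plus_vr_def uminus_vr_def zero_vr_def)
  show "a - b = a + - b" by (simp add: plus_vr_def uminus_vr_def minus_vr_def)
  show "(a + b) * c = a * c + b * c"
    by (cases a; cases b; cases c) (simp add: times_vr_def plus_vr_def algebra_simps)
  show "(0::'a vr) \<noteq> 1" by (simp add: zero_vr_def one_vr_def)
qed
end

definition vv :: "'a::comm_ring_1 vr" where "vv = VR 0 1"

definition emb :: "'a::comm_ring_1 poly \<Rightarrow> 'a vr poly" where
  "emb f = map_poly (\<lambda>c. VR c 0) f"

definition vinv :: "'a::comm_ring_1 vr \<Rightarrow> 'a vr" where
  "vinv t = (THE u. t * u = 1)"

text \<open>Words of length n over a ring: functions vanishing from index n on.\<close>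
definition words :: "nat \<Rightarrow> (nat \<Rightarrow> 'b::comm_ring_1) set" where
  "words n = {c. \<forall>i\<ge>n. c i = 0}"

definition submodule_code :: "nat \<Rightarrow> (nat \<Rightarrow> 'b::comm_ring_1) set \<Rightarrow> bool" where
  "submodule_code n C \<longleftrightarrow> C \<subseteq> words n \<and> (\<lambda>i. 0) \<in> C \<and>
     (\<forall>c\<in>C. \<forall>d\<in>C. (\<lambda>i. c i + d i) \<in> C) \<and>
     (\<forall>a. \<forall>c\<in>C. (\<lambda>i. a * c i) \<in> C)"

definition cshift :: "'b::comm_ring_1 \<Rightarrow> nat \<Rightarrow> (nat \<Rightarrow> 'b) \<Rightarrow> (nat \<Rightarrow> 'b)" where
  "cshift \<theta> n c = (\<lambda>i. if i = 0 then \<theta> * c (n - 1) else if i < n then c (i - 1) else 0)"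

definition constacyclic :: "'b::comm_ring_1 \<Rightarrow> nat \<Rightarrow> (nat \<Rightarrow> 'b) set \<Rightarrow> bool" where
  "constacyclic \<theta> n C \<longleftrightarrow> submodule_code n C \<and> (\<forall>c\<in>C. cshift \<theta> n c \<in> C)"

definition dual_code :: "nat \<Rightarrow> (nat \<Rightarrow> 'b::comm_ring_1) set \<Rightarrow> (nat \<Rightarrow> 'b) set" where
  "dual_code n C = {d \<in> words n. \<forall>c\<in>C. (\<Sum>i<n. c i * d i) = 0}"

definition poly_of :: "nat \<Rightarrow> (nat \<Rightarrow> 'b::comm_ring_1) \<Rightarrow> 'b poly" where
  "poly_of n c = (\<Sum>i<n. monom (c i) i)"

text \<open>The ideal of S[x]/<m> generated by a finite set G, where m is monic; residue classes
  are represented by their unique representatives of degree < degree m.\<close>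
definition quot_ideal_gen :: "'b::comm_ring_1 poly \<Rightarrow> 'b poly set \<Rightarrow> 'b poly set" where
  "quot_ideal_gen m G = {f. degree f < degree m \<and>
      (\<exists>a q. f = (\<Sum>g\<in>G. a g * g) + q * m)}"

text \<open>h^*(x) = (1/h(0)) x^{deg h} h(1/x).\<close>
definition recip_star :: "'a::field poly \<Rightarrow> 'a poly" where
  "recip_star h = smult (inverse (coeff h 0)) (reflect_poly h)"

text \<open>The polynomial Gray map phi_theta, for theta = lambda + v mu, applied to f = r + v q.\<close>
definition gray :: "'a::comm_ring_1 vr \<Rightarrow> nat \<Rightarrow> 'a vr poly \<Rightarrow> 'a poly" where
  "gray \<theta> n f = (let l = vr_r \<theta>; m = vr_q \<theta>; r = map_poly vr_r f; q = map_poly vr_q f in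
     smult (l * (l + m)) q + monom 1 n * (smult (- m) r - smult (l + m) q))"

end

theory Submission
  imports Defs
begin

lemma coeff_poly_of: "coeff (poly_of n c) i = (if i < n then c i else 0)"
  unfolding poly_of_def by (simp add: coeff_sum coeff_monom)

lemma degree_poly_of: "n > 0 \<Longrightarrow> degree (poly_of n c) < n"
proof -
  assume n: "n > 0"
  have "degree (poly_of n c) \<le> n - 1"
    by (rule degree_le) (auto simp: coeff_poly_of)
  with n show ?thesis by linarith
qed

lemma poly_of_coeff: "degree P < n \<Longrightarrow> poly_of n (coeff P) = P"
  by (rule poly_eqI) (auto simp: coeff_poly_of coeff_eq_0)

lemma coeff_poly_of_words: "c \<in> words n \<Longrightarrow> coeff (poly_of n c) = c"
  by (rule ext) (auto simp: coeff_poly_of words_def)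

lemma poly_of_inj: "c \<in> words n \<Longrightarrow> d \<in> words n \<Longrightarrow> poly_of n c = poly_of n d \<Longrightarrow> c = d"
  by (metis coeff_poly_of_words)

lemma coeff_words: "degree P < n \<Longrightarrow> coeff P \<in> words n"
  by (auto simp: words_def coeff_eq_0)

lemma words_card:
  assumes "finite (UNIV :: 'a set)"
  shows "finite (words k :: (nat \<Rightarrow> 'a::comm_ring_1) set) \<and> card (words k :: (nat \<Rightarrow> 'a) set) = CARD('a) ^ k"
proof -
  define L where "L = {xs. set xs \<subseteq> (UNIV::'a set) \<and> length xs = k}"
  define F where "F = (\<lambda>xs::'a list. \<lambda>i. if i < k then xs ! i else 0)"
  have eq: "words k = F ` L"
  proof
    show "F ` L \<subseteq> words k" by (auto simp: F_def words_def)
    show "words k \<subseteq> F ` L"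
    proof
      fix c :: "nat \<Rightarrow> 'a" assume "c \<in> words k"
      then have "c = F (map c [0..<k])" by (auto simp: F_def words_def)
      moreover have "map c [0..<k] \<in> L" by (simp add: L_def)
      ultimately show "c \<in> F ` L" by blast
    qed
  qed
  have inj: "inj_on F L"
  proof (rule inj_onI)
    fix xs ys assume "xs \<in> L" "ys \<in> L" "F xs = F ys"
    then have l: "length xs = k" "length ys = k" and e: "\<And>i. F xs i = F ys i" by (auto simp: L_def)
    show "xs = ys"
    proof (rule nth_equalityI)
      show "length xs = length ys" using l by simp
      fix i assume "i < length xs"
      then show "xs ! i = ys ! i" using e[of i] l by (simp add: F_def)
    qed
  qed
  have fL: "finite L" and cL: "card L = CARD('a) ^ k"
    using finite_lists_length_eq[OF assms, of k] card_lists_length_eq[OF assms, of k]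
    by (simp_all add: L_def)
  show ?thesis unfolding eq card_image[OF inj] using fL cL by simp
qed

lemma pairing:
  fixes U D :: "'a::comm_ring_1 poly"
  assumes n: "n > 0" and dU: "degree U < n" and dD: "degree D < n"
  shows "(\<Sum>i<n. coeff U i * coeff D i) =
         coeff (U * (monom 1 (n - 1 - degree D) * reflect_poly D)) (n - 1)"
proof -
  let ?e = "n - 1 - degree D"
  have "coeff (U * (monom 1 ?e * reflect_poly D)) (n - 1) =
        (\<Sum>i\<le>n-1. coeff U i * coeff (monom 1 ?e * reflect_poly D) (n - 1 - i))"
    by (rule coeff_mult)
  also have "\<dots> = (\<Sum>i\<le>n-1. coeff U i * coeff D i)"
  proof (rule sum.cong[OF refl])
    fix i assume i: "i \<in> {..n-1}"
    show "coeff U i * coeff (monom 1 ?e * reflect_poly D) (n - 1 - i) = coeff U i * coeff D i"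
    proof (cases "i \<le> degree D")
      case True
      then show ?thesis using i dD
        by (auto simp: coeff_monom_mult coeff_reflect_poly)
    next
      case False
      then show ?thesis using i dD
        by (auto simp: coeff_monom_mult coeff_reflect_poly coeff_eq_0)
    qed
  qed
  also have "{..n-1} = {..<n}" using n by auto
  finally show ?thesis by simp
qed

lemma coeff_const1 [simp]: "coeff [:c:] i = (if i = 0 then c else 0)"
  by (cases i) simp_all

lemma degree_xn_c: "n > 0 \<Longrightarrow> degree (monom (1::'a::comm_ring_1) n - [:c:]) = n"
proof -
  assume n: "n > 0"
  have "degree (monom (1::'a) n - [:c:]) \<le> n"
    by (rule degree_le) (auto simp: coeff_monom)
  moreover have "coeff (monom (1::'a) n - [:c:]) n \<noteq> 0" using n by (simp add: coeff_monom)
  then have "n \<le> degree (monom (1::'a) n - [:c:])" by (rule le_degree)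
  ultimately show ?thesis by simp
qed

lemma coeff_xn_c0: "n > 0 \<Longrightarrow> coeff (monom (1::'a::comm_ring_1) n - [:c:]) 0 = - c"
  by (simp add: coeff_monom)

definition Dset :: "nat \<Rightarrow> 'a::comm_ring_1 poly \<Rightarrow> (nat \<Rightarrow> 'a) set" where
  "Dset n g = {d \<in> words n. \<forall>u \<in> words n. g dvd poly_of n u \<longrightarrow> (\<Sum>i<n. u i * d i) = 0}"

definition Hset :: "nat \<Rightarrow> 'a::comm_ring_1 poly \<Rightarrow> (nat \<Rightarrow> 'a) set" where
  "Hset n k = {d \<in> words n. k dvd poly_of n d}"

lemma dual_field:
  fixes g h :: "'a::field poly" and c :: 'a
  assumes fin: "finite (UNIV::'a set)" and n: "n > 0" and lc: "lead_coeff g = 1"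
    and gh: "g * h = monom 1 n - [:c:]" and c: "c \<noteq> 0"
  shows "Dset n g = Hset n (recip_star h) \<and> card (Dset n g) = CARD('a) ^ degree g"
proof -
  define k where "k = degree g"
  define m where "m = degree h"
  define hs where "hs = recip_star h"
  define h0 where "h0 = coeff h 0"
  have gh0: "g * h \<noteq> 0"
  proof
    assume "g * h = 0"
    then have "coeff (monom (1::'a) n - [:c:]) n = 0" using gh by simp
    then show False using n by (simp add: coeff_monom)
  qed
  then have g0: "g \<noteq> 0" and h0: "h \<noteq> 0" by auto
  have km: "k + m = n" using degree_mult_eq[OF g0 h0] gh degree_xn_c[OF n, of c] k_def m_def by simp
  have "coeff g 0 * h0 = - c" using arg_cong[OF gh, of "\<lambda>p. coeff p 0"] coeff_xn_c0[OF n]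
    by (simp add: h0_def coeff_mult)
  then have h0nz: "h0 \<noteq> 0" using c by auto
  have hs_def': "hs = smult (inverse h0) (reflect_poly h)" by (simp add: hs_def recip_star_def h0_def)
  have rhs: "reflect_poly hs = smult (inverse h0) h"
    using h0nz by (simp add: hs_def' reflect_poly_smult h0_def)
  have hsnz: "hs \<noteq> 0" using h0nz h0 by (simp add: hs_def')
  have dhs: "degree hs = m" using h0nz by (simp add: hs_def' m_def h0_def)
  have finw: "finite (words n :: (nat \<Rightarrow> 'a) set)" using words_card[OF fin] by blast
  have HD: "Hset n hs \<subseteq> Dset n g"
  proof
    fix d assume "d \<in> Hset n hs"
    then have dw: "d \<in> words n" and hsd: "hs dvd poly_of n d" by (auto simp: Hset_def)
    show "d \<in> Dset n g" unfolding Dset_def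
    proof (intro CollectI conjI ballI impI dw)
      fix u assume uw: "u \<in> words n" and gu: "g dvd poly_of n u"
      define P where "P = poly_of n u"
      define Q where "Q = poly_of n d"
      have su: "(\<Sum>i<n. u i * d i) = (\<Sum>i<n. coeff P i * coeff Q i)"
        using uw dw by (simp add: P_def Q_def coeff_poly_of_words)
      show "(\<Sum>i<n. u i * d i) = 0"
      proof (cases "P = 0 \<or> Q = 0")
        case True then show ?thesis unfolding su by auto
      next
        case False
        then have P0: "P \<noteq> 0" and Q0: "Q \<noteq> 0" by auto
        obtain t where t: "Q = hs * t" using hsd Q_def by (auto elim: dvdE)
        obtain s where s: "P = g * s" using gu P_def by (auto elim: dvdE)
        have t0: "t \<noteq> 0" and s0: "s \<noteq> 0" using P0 Q0 s t by auto
        have dQ: "degree Q < n" and dP: "degree P < n" using degree_poly_of[OF n] P_def Q_def by auto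
        have dQ': "degree Q = m + degree t" using t hsnz t0 dhs degree_mult_eq by auto
        have dP': "degree P = k + degree s" using s g0 s0 k_def degree_mult_eq by auto
        define e where "e = n - 1 - degree Q"
        define W where "W = s * (monom 1 e * reflect_poly t)"
        have "P * (monom 1 e * reflect_poly Q) = smult (inverse h0) ((g * h) * W)"
          unfolding W_def s t reflect_poly_mult rhs by (simp add: ac_simps)
        also have "\<dots> = smult (inverse h0) (monom 1 n * W - smult c W)"
          by (simp add: gh algebra_simps)
        finally have eqn: "P * (monom 1 e * reflect_poly Q) = smult (inverse h0) (monom 1 n * W - smult c W)" .
        have "degree W \<le> degree s + (e + degree t)"
        proof -
          have "degree (monom (1::'a) e * reflect_poly t) \<le> e + degree t"
            using degree_mult_le[of "monom (1::'a) e" "reflect_poly t"] degree_monom_le[of "1::'a" e]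
              degree_reflect_poly_le[of t] by linarith
          then show ?thesis unfolding W_def using degree_mult_le[of s "monom 1 e * reflect_poly t"] by linarith
        qed
        then have dW: "degree W < n - 1" using dQ dQ' dP dP' km e_def by linarith
        have "(\<Sum>i<n. coeff P i * coeff Q i) = coeff (P * (monom 1 e * reflect_poly Q)) (n - 1)"
          unfolding e_def by (rule pairing[OF n dP dQ])
        also have "\<dots> = 0" unfolding eqn using dW n
          by (simp add: coeff_monom_mult coeff_eq_0)
        finally show ?thesis using su by simp
      qed
    qed
  qed
  have zero_ext: "d = (\<lambda>i. 0)" if dD: "d \<in> Dset n g" and low: "\<forall>i<k. d i = 0" for d
  proof -
    have dw: "d \<in> words n" and orth: "\<And>u. u \<in> words n \<Longrightarrow> g dvd poly_of n u \<Longrightarrow> (\<Sum>i<n. u i * d i) = 0"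
      using dD by (auto simp: Dset_def)
    have "d i = 0" for i
    proof (induction i rule: less_induct)
      case (less i)
      show ?case
      proof (cases "i < k")
        case True then show ?thesis using low by auto
      next
        case False
        show ?thesis
        proof (cases "i < n")
          case False then show ?thesis using dw by (auto simp: words_def)
        next
          case True
          define j where "j = i - k"
          have ij: "i = j + k" using \<open>\<not> i < k\<close> j_def by simp
          define G where "G = monom (1::'a) j * g"
          have dG: "degree G < n"
          proof -
            have "degree G \<le> j + k" unfolding G_def k_def
              using degree_mult_le[of "monom (1::'a) j" g] degree_monom_le[of "1::'a" j] by linarith
            then show ?thesis using True ij by linarith
          qed
          have "(\<Sum>i'<n. coeff G i' * d i') = 0"
            using orth[of "coeff G"] coeff_words[OF dG] poly_of_coeff[OF dG] by (simp add: G_def)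
          moreover have "(\<Sum>i'<n. coeff G i' * d i') = (\<Sum>i'<n. if i' = i then d i else 0)"
          proof (rule sum.cong[OF refl])
            fix i' assume "i' \<in> {..<n}"
            show "coeff G i' * d i' = (if i' = i then d i else 0)"
            proof (cases "i' < i")
              case True then show ?thesis using less.IH[of i'] by simp
            next
              case False
              show ?thesis
              proof (cases "i' = i")
                case True
                then show ?thesis using lc by (simp add: G_def coeff_monom_mult ij k_def)
              next
                case False
                with \<open>\<not> i' < i\<close> have "i' > i" by simp
                then have "coeff G i' = 0" unfolding G_def coeff_monom_mult
                  using ij k_def by (auto intro: coeff_eq_0)
                then show ?thesis using False by simp
              qed
            qed
          qed
          ultimately show ?thesis using True by simp
        qed
      qed
    qed
    then show ?thesis by auto
  qed
  have sub: "(\<lambda>i. d i - d' i) \<in> Dset n g" if "d \<in> Dset n g" "d' \<in> Dset n g" for d d'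
    using that by (auto simp: Dset_def words_def right_diff_distrib sum_subtractf)
  define tr where "tr = (\<lambda>(d::nat \<Rightarrow> 'a) i. if i < k then d i else 0)"
  have inj_tr: "inj_on tr (Dset n g)"
  proof (rule inj_onI)
    fix d d' assume a: "d \<in> Dset n g" "d' \<in> Dset n g" "tr d = tr d'"
    have "\<forall>i<k. d i - d' i = 0" using a(3) unfolding tr_def by (metis (no_types, lifting) right_minus_eq)
    then have "(\<lambda>i. d i - d' i) = (\<lambda>i. 0)" using zero_ext[OF sub[OF a(1,2)]] by simp
    then show "d = d'" by (metis (no_types, lifting) eq_iff_diff_eq_0 ext fun_cong)
  qed
  have trw: "tr ` Dset n g \<subseteq> words k" by (auto simp: tr_def words_def)
  have finD: "finite (Dset n g)" using finw by (rule rev_finite_subset) (auto simp: Dset_def)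
  have cD: "card (Dset n g) \<le> CARD('a) ^ k"
    using card_image[OF inj_tr] card_mono[OF _ trw] words_card[OF fin, of k] by simp
  define E where "E = (\<lambda>t. coeff (hs * poly_of k t))"
  have dE: "degree (hs * poly_of k t) < n" for t
  proof (cases "k = 0")
    case True then show ?thesis using n by (simp add: poly_of_def)
  next
    case False
    then have "degree (poly_of k t) < k" by (simp add: degree_poly_of)
    then show ?thesis using degree_mult_le[of hs "poly_of k t"] dhs km by linarith
  qed
  have EH: "E ` words k \<subseteq> Hset n hs"
    using dE by (auto simp: E_def Hset_def coeff_words poly_of_coeff)
  have injE: "inj_on E (words k)"
  proof (rule inj_onI)
    fix t t' assume a: "t \<in> words k" "t' \<in> words k" "E t = E t'"
    then have "hs * poly_of k t = hs * poly_of k t'" unfolding E_def by (simp add: coeff_inject)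
    then have "poly_of k t = poly_of k t'" using hsnz by simp
    then show "t = t'" using poly_of_inj a by blast
  qed
  have finH: "finite (Hset n hs)" using finw by (rule rev_finite_subset) (auto simp: Hset_def)
  have cH: "CARD('a) ^ k \<le> card (Hset n hs)"
    using card_image[OF injE] card_mono[OF finH EH] words_card[OF fin, of k] by simp
  have "card (Hset n hs) \<le> card (Dset n g)" using card_mono[OF finD HD] .
  then have eqc: "card (Hset n hs) = card (Dset n g)" using cD cH by linarith
  have "Hset n hs = Dset n g" using card_subset_eq[OF finD HD eqc] .
  then show ?thesis using eqc cD cH by (simp add: hs_def k_def)
qed

definition hA :: "'a::comm_ring_1 vr \<Rightarrow> 'a" where "hA z = vr_r z + vr_q z"
definition pA :: "'a::comm_ring_1 vr poly \<Rightarrow> 'a poly" where "pA P = map_poly hA P"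
definition pB :: "'a::comm_ring_1 vr poly \<Rightarrow> 'a poly" where "pB P = map_poly vr_r P"

lemma hA_simps [simp]:
  "hA (x * y) = hA x * hA y" "hA (x + y) = hA x + hA y" "hA (x - y) = hA x - hA y"
  "hA (- x) = - hA x" "hA 0 = 0" "hA 1 = 1" "hA vv = 1" "hA (VR a b) = a + b"
  by (simp_all add: hA_def times_vr_def plus_vr_def minus_vr_def uminus_vr_def zero_vr_def
      one_vr_def vv_def algebra_simps)

lemma hB_simps [simp]:
  "vr_r (x * y) = vr_r x * vr_r y" "vr_r (x + y) = vr_r x + vr_r y" "vr_r (x - y) = vr_r x - vr_r y"
  "vr_r (- x) = - vr_r x" "vr_r 0 = 0" "vr_r 1 = 1" "vr_r vv = 0"
  "vr_q (x + y) = vr_q x + vr_q y" "vr_q 0 = 0"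
  by (simp_all add: times_vr_def plus_vr_def minus_vr_def uminus_vr_def zero_vr_def
      one_vr_def vv_def)

lemma hA_sum: "hA (sum f S) = (\<Sum>x\<in>S. hA (f x))"
  by (induction S rule: infinite_finite_induct) auto

lemma hB_sum: "vr_r (sum f S) = (\<Sum>x\<in>S. vr_r (f x))"
  by (induction S rule: infinite_finite_induct) auto

lemma vr_eqI: "hA x = hA y \<Longrightarrow> vr_r x = vr_r y \<Longrightarrow> x = y"
  by (cases x; cases y) (simp add: hA_def)

lemma coeff_pA: "coeff (pA P) i = hA (coeff P i)"
  by (simp add: pA_def coeff_map_poly)

lemma coeff_pB: "coeff (pB P) i = vr_r (coeff P i)"
  by (simp add: pB_def coeff_map_poly)

lemma pA_mult: "pA (P * Q) = pA P * pA Q"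
  by (rule poly_eqI) (simp add: coeff_pA coeff_mult hA_sum)

lemma pB_mult: "pB (P * Q) = pB P * pB Q"
  by (rule poly_eqI) (simp add: coeff_pB coeff_mult hB_sum)

lemma pA_add: "pA (P + Q) = pA P + pA Q" and pB_add: "pB (P + Q) = pB P + pB Q"
  and pA_diff: "pA (P - Q) = pA P - pA Q" and pB_diff: "pB (P - Q) = pB P - pB Q"
  by (rule poly_eqI; simp add: coeff_pA coeff_pB)+

lemma pA_0 [simp]: "pA 0 = 0" and pB_0 [simp]: "pB 0 = 0"
  by (simp_all add: pA_def pB_def)

lemma pA_sum: "pA (sum f S) = (\<Sum>x\<in>S. pA (f x))"
  by (induction S rule: infinite_finite_induct) (auto simp: pA_add)

lemma pB_sum: "pB (sum f S) = (\<Sum>x\<in>S. pB (f x))"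
  by (induction S rule: infinite_finite_induct) (auto simp: pB_add)

lemma vr_zero: "VR 0 0 = 0" by (simp add: zero_vr_def)

lemma pA_smult [simp]: "pA (smult z P) = smult (hA z) (pA P)"
  and pB_smult [simp]: "pB (smult z P) = smult (vr_r z) (pB P)"
  by (rule poly_eqI; simp add: coeff_pA coeff_pB)+

lemma poly_vr_eqI: "pA P = pA Q \<Longrightarrow> pB P = pB Q \<Longrightarrow> P = Q"
  by (rule poly_eqI, rule vr_eqI) (metis coeff_pA coeff_pB)+

lemma pA_const [simp]: "pA [:z:] = [:hA z:]" and pB_const [simp]: "pB [:z:] = [:vr_r z:]"
  by (rule poly_eqI; simp add: coeff_pA coeff_pB)+

lemma pA_emb [simp]: "pA (emb f) = f" and pB_emb [simp]: "pB (emb f) = f"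
  by (rule poly_eqI; simp add: coeff_pA coeff_pB emb_def coeff_map_poly vr_zero)+

lemma pA_monom [simp]: "pA (monom 1 n) = monom 1 n" and pB_monom [simp]: "pB (monom 1 n) = monom 1 n"
  by (rule poly_eqI; simp add: coeff_pA coeff_pB coeff_monom)+

lemma qig_char:
  fixes \<theta>' :: "'a::field vr" and k1 k2 :: "'a poly"
  assumes n: "n > 0" and d1: "k1 dvd monom 1 n - [:hA \<theta>':]" and d2: "k2 dvd monom 1 n - [:vr_r \<theta>':]"
  shows "quot_ideal_gen (monom 1 n - [:\<theta>':]) {[:vv:] * emb k1, [:1 - vv:] * emb k2}
           = {f. degree f < n \<and> k1 dvd pA f \<and> k2 dvd pB f}" (is ?A)
    and "quot_ideal_gen (monom 1 n - [:\<theta>':]) {[:vv:] * emb k1 + [:1 - vv:] * emb k2}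
           = {f. degree f < n \<and> k1 dvd pA f \<and> k2 dvd pB f}" (is ?B)
proof -
  let ?m = "monom 1 n - [:\<theta>':]"
  let ?G1 = "[:vv:] * emb k1" and ?G2 = "[:1 - vv:] * emb k2"
  have dm: "degree ?m = n" using degree_xn_c[OF n] by blast
  have pAm: "pA ?m = monom 1 n - [:hA \<theta>':]" and pBm: "pB ?m = monom 1 n - [:vr_r \<theta>':]"
    by (simp_all add: pA_diff pB_diff)
  have sub: "quot_ideal_gen ?m G \<subseteq> {f. degree f < n \<and> k1 dvd pA f \<and> k2 dvd pB f}"
    if GA: "\<forall>g\<in>G. k1 dvd pA g" and GB: "\<forall>g\<in>G. k2 dvd pB g" for G
  proof
    fix f assume "f \<in> quot_ideal_gen ?m G"
    then obtain a q where df: "degree f < n" and f: "f = (\<Sum>g\<in>G. a g * g) + q * ?m"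
      unfolding quot_ideal_gen_def dm by blast
    have "k1 dvd pA f" unfolding f pA_add pA_sum pA_mult pAm
      using GA d1 by (intro dvd_add dvd_sum dvd_mult) auto
    moreover have "k2 dvd pB f" unfolding f pB_add pB_sum pB_mult pBm
      using GB d2 by (intro dvd_add dvd_sum dvd_mult) auto
    ultimately show "f \<in> {f. degree f < n \<and> k1 dvd pA f \<and> k2 dvd pB f}" using df by simp
  qed
  have pG: "pA ?G1 = k1" "pB ?G1 = 0" "pA ?G2 = 0" "pB ?G2 = k2"
    by (simp_all add: pA_mult pB_mult)
  have k1nz: "k1 \<noteq> 0"
  proof
    assume "k1 = 0"
    then have "monom 1 n - [:hA \<theta>':] = 0" using d1 by simp
    then have "coeff (monom (1::'a) n - [:hA \<theta>':]) n = 0" by simp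
    then show False using n by (simp add: coeff_monom)
  qed
  have G12: "?G1 \<noteq> ?G2" using pG k1nz by metis
  show ?A
  proof
    show "quot_ideal_gen ?m {?G1, ?G2} \<subseteq> {f. degree f < n \<and> k1 dvd pA f \<and> k2 dvd pB f}"
      by (rule sub) (auto simp: pG)
    show "{f. degree f < n \<and> k1 dvd pA f \<and> k2 dvd pB f} \<subseteq> quot_ideal_gen ?m {?G1, ?G2}"
    proof
      fix f assume "f \<in> {f. degree f < n \<and> k1 dvd pA f \<and> k2 dvd pB f}"
      then obtain u1 u2 where df: "degree f < n" and u1: "pA f = k1 * u1" and u2: "pB f = k2 * u2"
        by (auto elim!: dvdE)
      define a where "a = (\<lambda>g. if g = ?G1 then emb u1 else emb u2)"
      have "f = (\<Sum>g\<in>{?G1, ?G2}. a g * g) + 0 * ?m"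
        using G12 by (intro poly_vr_eqI) (simp_all add: a_def pA_add pB_add pA_mult pB_mult pG u1 u2 mult.commute)
      then show "f \<in> quot_ideal_gen ?m {?G1, ?G2}" unfolding quot_ideal_gen_def dm using df by blast
    qed
  qed
  show ?B
  proof
    show "quot_ideal_gen ?m {?G1 + ?G2} \<subseteq> {f. degree f < n \<and> k1 dvd pA f \<and> k2 dvd pB f}"
      by (rule sub) (auto simp: pG pA_add pB_add)
    show "{f. degree f < n \<and> k1 dvd pA f \<and> k2 dvd pB f} \<subseteq> quot_ideal_gen ?m {?G1 + ?G2}"
    proof
      fix f assume "f \<in> {f. degree f < n \<and> k1 dvd pA f \<and> k2 dvd pB f}"
      then obtain u1 u2 where df: "degree f < n" and u1: "pA f = k1 * u1" and u2: "pB f = k2 * u2"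
        by (auto elim!: dvdE)
      define a where "a = (\<lambda>g::'a vr poly. [:vv:] * emb u1 + [:1 - vv:] * emb u2)"
      have "f = (\<Sum>g\<in>{?G1 + ?G2}. a g * g) + 0 * ?m"
        by (intro poly_vr_eqI) (simp_all add: a_def pA_add pB_add pA_mult pB_mult pG u1 u2 mult.commute)
      then show "f \<in> quot_ideal_gen ?m {?G1 + ?G2}" unfolding quot_ideal_gen_def dm using df by blast
    qed
  qed
qed

lemma recip_dvd:
  fixes g h :: "'a::field poly"
  assumes n: "n > 0" and gh: "g * h = monom 1 n - [:c:]" and c: "c \<noteq> 0"
  shows "recip_star h dvd monom 1 n - [:inverse c:]"
proof -
  have "coeff g 0 * coeff h 0 = - c" using arg_cong[OF gh, of "\<lambda>p. coeff p 0"] coeff_xn_c0[OF n]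
    by (simp add: coeff_mult)
  then have h0nz: "coeff h 0 \<noteq> 0" using c by auto
  have refl: "reflect_poly (monom 1 n - [:c:]) = smult (- c) (monom 1 n - [:inverse c:])"
  proof (rule poly_eqI)
    fix i
    show "coeff (reflect_poly (monom 1 n - [:c:])) i = coeff (smult (- c) (monom 1 n - [:inverse c:])) i"
      using n c by (cases "i = 0"; cases "i = n"; cases "i < n")
        (auto simp: coeff_reflect_poly degree_xn_c coeff_monom)
  qed
  have "reflect_poly h dvd reflect_poly (monom 1 n - [:c:])"
    unfolding gh[symmetric] reflect_poly_mult by simp
  then have "reflect_poly h dvd monom 1 n - [:inverse c:]"
    unfolding refl using c by (simp add: dvd_smult_iff)
  then show ?thesis unfolding recip_star_def using h0nz by (simp add: smult_dvd)
qed

lemma smult_conv_mult_const: "smult c p = [:c:] * p" by simp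

lemma comb:
  fixes l :: "'a::field" and k :: "'a poly"
  assumes l: "l \<noteq> 0" and kd: "k dvd monom 1 n - [:inverse l:]"
  shows "\<exists>s t. [:l:] - monom 1 n = s * k + t * (monom 1 (2 * n) - 1)"
proof -
  obtain k' where k': "monom 1 n - [:inverse l:] = k * k'" using kd by (auto elim: dvdE)
  let ?X = "monom (1::'a) n" and ?z = "inverse l"
  show ?thesis
  proof (cases "l * l = 1")
    case True
    then have "?z = l" using l by (metis inverse_unique)
    then have "[:l:] - ?X = (- k') * k + 0 * (monom 1 (2 * n) - 1)"
      using k' by (simp add: algebra_simps)
    then show ?thesis by blast
  next
    case False
    define e where "e = ?z * ?z - 1"
    have e0: "e \<noteq> 0" using False l unfolding e_def
      by (metis eq_iff_diff_eq_0 inverse_mult_distrib inverse_1 inverse_inverse_eq)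
    have XX: "?X * ?X = monom 1 (2 * n)" by (simp add: mult_monom mult_2)
    have E: "monom 1 (2 * n) - 1 = (?X - [:?z:]) * (?X + [:?z:]) + [:e:]"
      unfolding XX[symmetric] e_def by (simp add: algebra_simps one_pCons)
    define s where "s = - smult (inverse e) (([:l:] - ?X) * k' * (?X + [:?z:]))"
    define t where "t = smult (inverse e) ([:l:] - ?X)"
    have gen: "(- ([:cc:] * (A * kk' * Q))) * kk + ([:cc:] * A) * E' = [:cc:] * (A * (E' - (kk * kk') * Q))"
      for A kk kk' Q E' :: "'a poly" and cc :: 'a
      by (simp add: algebra_simps)
    have "s * k + t * (monom 1 (2 * n) - 1) =
          smult (inverse e) (([:l:] - ?X) * ((monom 1 (2 * n) - 1) - (?X - [:?z:]) * (?X + [:?z:])))"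
      unfolding s_def t_def k' using gen[of "inverse e" "[:l:] - ?X" k' "?X + [:?z:]" k "monom 1 (2 * n) - 1"]
      by (simp only: smult_conv_mult_const minus_mult_left)
    also have "\<dots> = smult (inverse e) (([:l:] - ?X) * [:e:])" unfolding E by simp
    also have "\<dots> = [:l:] - ?X" using e0 by simp
    finally show ?thesis by metis
  qed
qed

lemma pA_poly_of: "pA (poly_of n c) = poly_of n (\<lambda>i. hA (c i))"
  and pB_poly_of: "pB (poly_of n c) = poly_of n (\<lambda>i. vr_r (c i))"
  by (rule poly_eqI; simp add: coeff_pA coeff_pB coeff_poly_of)+

lemma dpA: "n > 0 \<Longrightarrow> degree P < n \<Longrightarrow> degree (pA P) < n"
proof -
  assume n: "n > 0" and d: "degree P < n"
  have "degree (pA P) \<le> n - 1" by (rule degree_le) (use d in \<open>auto simp: coeff_pA coeff_eq_0\<close>)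
  then show ?thesis using n by linarith
qed

lemma dpB: "n > 0 \<Longrightarrow> degree P < n \<Longrightarrow> degree (pB P) < n"
proof -
  assume n: "n > 0" and d: "degree P < n"
  have "degree (pB P) \<le> n - 1" by (rule degree_le) (use d in \<open>auto simp: coeff_pB coeff_eq_0\<close>)
  then show ?thesis using n by linarith
qed

lemma hA_VR0 [simp]: "hA (VR 0 x) = x" by simp

theorem theorem3p16:
  fixes p n :: nat and \<theta> :: "'a::field vr" and C :: "(nat \<Rightarrow> 'a vr) set"
    and g1 g2 h1 h2 :: "'a poly"
  assumes p: "prime p" "odd p" "CARD('a) = p"
    and n: "n > 0"
    and unit: "\<theta> dvd 1"
    and cc: "constacyclic \<theta> n C"
    and g1: "lead_coeff g1 = 1" "g1 dvd (monom 1 n - [:vr_r \<theta> + vr_q \<theta>:])"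
    and g2: "lead_coeff g2 = 1" "g2 dvd (monom 1 n - [:vr_r \<theta>:])"
    and gen: "poly_of n ` C = quot_ideal_gen (monom 1 n - [:\<theta>:]) {[:vv:] * emb g1, [:1 - vv:] * emb g2}"
    and h1: "g1 * h1 = monom 1 n - [:vr_r \<theta> + vr_q \<theta>:]"
    and h2: "g2 * h2 = monom 1 n - [:vr_r \<theta>:]"
  shows "poly_of n ` dual_code n C = quot_ideal_gen (monom 1 n - [:vinv \<theta>:])
            {[:vv:] * emb (recip_star h1), [:1 - vv:] * emb (recip_star h2)}
       \<and> card (dual_code n C) = p ^ (degree g1 + degree g2)
       \<and> poly_of n ` dual_code n C = quot_ideal_gen (monom 1 n - [:vinv \<theta>:])
            {[:vv:] * emb (recip_star h1) + [:1 - vv:] * emb (recip_star h2)}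
       \<and> gray \<theta> n ` poly_of n ` dual_code n C
            \<subseteq> quot_ideal_gen (monom 1 (2 * n) - 1) {recip_star h1 * recip_star h2}"
proof -
  have fin: "finite (UNIV :: 'a set)" using p by (metis card_ge_0_finite prime_gt_0_nat)
  define l where "l = vr_r \<theta>"
  define c1 where "c1 = vr_r \<theta> + vr_q \<theta>"
  have hAt: "hA \<theta> = c1" by (simp add: hA_def c1_def)
  obtain u where u: "\<theta> * u = 1" using unit by (metis dvdE)
  have vinv: "vinv \<theta> = u" unfolding vinv_def
  proof (rule the_equality)
    show "\<theta> * u = 1" by (rule u)
    fix y assume "\<theta> * y = 1"
    then have "u * (\<theta> * y) = u" by simp
    then show "y = u" using u by (simp add: mult.assoc[symmetric] mult.commute)
  qed
  have cu: "c1 * hA u = 1" using arg_cong[OF u, of hA] hAt by simp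
  then have c1nz: "c1 \<noteq> 0" by auto
  have hAv: "hA (vinv \<theta>) = inverse c1" using inverse_unique[OF cu] vinv by simp
  have lu: "l * vr_r u = 1" using arg_cong[OF u, of vr_r] by (simp add: l_def)
  then have lnz: "l \<noteq> 0" by auto
  have hBv: "vr_r (vinv \<theta>) = inverse l" using inverse_unique[OF lu] vinv by simp
  note h1' = h1[folded c1_def] and h2' = h2[folded l_def]
  let ?h1s = "recip_star h1" and ?h2s = "recip_star h2"
  have Cw: "C \<subseteq> words n" using cc by (simp add: constacyclic_def submodule_code_def)
  have T0: "poly_of n ` C = {f. degree f < n \<and> g1 dvd pA f \<and> g2 dvd pB f}"
    unfolding gen by (rule qig_char(1)[OF n]) (use g1 g2 in \<open>simp_all add: hAt c1_def\<close>)
  have Cmem: "c \<in> C \<longleftrightarrow> g1 dvd poly_of n (\<lambda>i. hA (c i)) \<and> g2 dvd poly_of n (\<lambda>i. vr_r (c i))"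
    if cw: "c \<in> words n" for c
  proof
    assume "c \<in> C"
    then have "poly_of n c \<in> poly_of n ` C" by blast
    then show "g1 dvd poly_of n (\<lambda>i. hA (c i)) \<and> g2 dvd poly_of n (\<lambda>i. vr_r (c i))"
      unfolding T0 by (simp add: pA_poly_of pB_poly_of)
  next
    assume "g1 dvd poly_of n (\<lambda>i. hA (c i)) \<and> g2 dvd poly_of n (\<lambda>i. vr_r (c i))"
    then have "poly_of n c \<in> poly_of n ` C" unfolding T0
      using degree_poly_of[OF n] by (simp add: pA_poly_of pB_poly_of)
    then obtain c' where "c' \<in> C" "poly_of n c' = poly_of n c" by auto
    then show "c \<in> C" using poly_of_inj[OF _ cw] Cw by blast
  qed
  define DA where "DA = Dset n g1"
  define DB where "DB = Dset n g2"
  have DA: "DA = Hset n ?h1s" "card DA = CARD('a) ^ degree g1"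
    unfolding DA_def by (rule conjunct1[OF dual_field[OF fin n g1(1) h1' c1nz]],
      rule conjunct2[OF dual_field[OF fin n g1(1) h1' c1nz]])
  have DB: "DB = Hset n ?h2s" "card DB = CARD('a) ^ degree g2"
    unfolding DB_def by (rule conjunct1[OF dual_field[OF fin n g2(1) h2' lnz]],
      rule conjunct2[OF dual_field[OF fin n g2(1) h2' lnz]])
  have wA: "(\<lambda>i. hA (d i)) \<in> words n" and wB: "(\<lambda>i. vr_r (d i)) \<in> words n" if "d \<in> words n" for d
    using that by (auto simp: words_def)
  have dual_char: "d \<in> dual_code n C \<longleftrightarrow>
      d \<in> words n \<and> (\<lambda>i. hA (d i)) \<in> DA \<and> (\<lambda>i. vr_r (d i)) \<in> DB" for d
  proof
    assume "d \<in> dual_code n C"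
    then have dw: "d \<in> words n" and orth: "\<And>c. c \<in> C \<Longrightarrow> (\<Sum>i<n. c i * d i) = 0"
      by (auto simp: dual_code_def)
    have "(\<lambda>i. hA (d i)) \<in> DA" unfolding DA_def Dset_def
    proof (intro CollectI conjI ballI impI wA[OF dw])
      fix w assume ww: "w \<in> words n" and gw: "g1 dvd poly_of n w"
      define c where "c = (\<lambda>i. VR 0 (w i))"
      have cw: "c \<in> words n" using ww by (auto simp: words_def c_def vr_zero)
      have "c \<in> C" using Cmem[OF cw] gw
        by (simp add: c_def poly_of_def)
      then have "hA (\<Sum>i<n. c i * d i) = 0" using orth by simp
      then show "(\<Sum>i<n. w i * hA (d i)) = 0" by (simp add: hA_sum c_def)
    qed
    moreover have "(\<lambda>i. vr_r (d i)) \<in> DB" unfolding DB_def Dset_def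
    proof (intro CollectI conjI ballI impI wB[OF dw])
      fix w assume ww: "w \<in> words n" and gw: "g2 dvd poly_of n w"
      define c where "c = (\<lambda>i. VR (w i) (- w i))"
      have cw: "c \<in> words n" using ww by (auto simp: words_def c_def vr_zero)
      have "c \<in> C" using Cmem[OF cw] gw
        by (simp add: c_def poly_of_def)
      then have "vr_r (\<Sum>i<n. c i * d i) = 0" using orth by simp
      then show "(\<Sum>i<n. w i * vr_r (d i)) = 0" by (simp add: hB_sum c_def)
    qed
    ultimately show "d \<in> words n \<and> (\<lambda>i. hA (d i)) \<in> DA \<and> (\<lambda>i. vr_r (d i)) \<in> DB" using dw by blast
  next
    assume a: "d \<in> words n \<and> (\<lambda>i. hA (d i)) \<in> DA \<and> (\<lambda>i. vr_r (d i)) \<in> DB"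
    show "d \<in> dual_code n C" unfolding dual_code_def
    proof (intro CollectI conjI ballI)
      show "d \<in> words n" using a by blast
      fix c assume cC: "c \<in> C"
      then have cw: "c \<in> words n" using Cw by blast
      have "(\<Sum>i<n. hA (c i) * hA (d i)) = 0"
        using a Cmem[OF cw] cC wA[OF cw] by (auto simp: DA_def Dset_def)
      moreover have "(\<Sum>i<n. vr_r (c i) * vr_r (d i)) = 0"
        using a Cmem[OF cw] cC wB[OF cw] by (auto simp: DB_def Dset_def)
      ultimately show "(\<Sum>i<n. c i * d i) = 0"
        by (intro vr_eqI) (simp_all add: hA_sum hB_sum)
    qed
  qed
  define T where "T = {f. degree f < n \<and> ?h1s dvd pA f \<and> ?h2s dvd pB f}"
  have polyDual: "poly_of n ` dual_code n C = T"
  proof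
    show "poly_of n ` dual_code n C \<subseteq> T"
    proof
      fix f assume "f \<in> poly_of n ` dual_code n C"
      then obtain d where d: "d \<in> dual_code n C" and f: "f = poly_of n d" by blast
      then show "f \<in> T" using dual_char[of d] degree_poly_of[OF n] DA DB
        by (auto simp: T_def Hset_def pA_poly_of pB_poly_of)
    qed
    show "T \<subseteq> poly_of n ` dual_code n C"
    proof
      fix f assume fT: "f \<in> T"
      define d where "d = coeff f"
      have df: "degree f < n" using fT by (simp add: T_def)
      have dw: "d \<in> words n" and pd: "poly_of n d = f" using coeff_words[OF df] poly_of_coeff[OF df]
        by (simp_all add: d_def)
      have "d \<in> dual_code n C" unfolding dual_char using dw fT wA[OF dw] wB[OF dw] DA DB
        by (simp add: T_def Hset_def pA_poly_of[symmetric] pB_poly_of[symmetric] pd)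
      then show "f \<in> poly_of n ` dual_code n C" using pd by blast
    qed
  qed
  have rd1: "?h1s dvd monom 1 n - [:hA (vinv \<theta>):]" using recip_dvd[OF n h1' c1nz] hAv by simp
  have rd2: "?h2s dvd monom 1 n - [:vr_r (vinv \<theta>):]" using recip_dvd[OF n h2' lnz] hBv by simp
  have P1: "poly_of n ` dual_code n C = quot_ideal_gen (monom 1 n - [:vinv \<theta>:])
            {[:vv:] * emb ?h1s, [:1 - vv:] * emb ?h2s}"
    unfolding polyDual T_def by (rule qig_char(1)[OF n rd1 rd2, symmetric])
  have P2: "poly_of n ` dual_code n C = quot_ideal_gen (monom 1 n - [:vinv \<theta>:])
            {[:vv:] * emb ?h1s + [:1 - vv:] * emb ?h2s}"
    unfolding polyDual T_def by (rule qig_char(2)[OF n rd1 rd2, symmetric])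
  define F where "F = (\<lambda>d::nat \<Rightarrow> 'a vr. ((\<lambda>i. hA (d i)), (\<lambda>i. vr_r (d i))))"
  have injF: "inj_on F (dual_code n C)"
  proof (rule inj_onI)
    fix d d' assume "F d = F d'"
    then have e: "(\<lambda>i. hA (d i)) = (\<lambda>i. hA (d' i))" "(\<lambda>i. vr_r (d i)) = (\<lambda>i. vr_r (d' i))"
      unfolding F_def by simp_all
    show "d = d'"
    proof (rule ext, rule vr_eqI)
      fix i
      show "hA (d i) = hA (d' i)" using fun_cong[OF e(1), of i] by simp
      show "vr_r (d i) = vr_r (d' i)" using fun_cong[OF e(2), of i] by simp
    qed
  qed
  have imF: "F ` dual_code n C = DA \<times> DB"
  proof
    show "F ` dual_code n C \<subseteq> DA \<times> DB" using dual_char by (auto simp: F_def)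
    show "DA \<times> DB \<subseteq> F ` dual_code n C"
    proof
      fix x assume x: "x \<in> DA \<times> DB"
      obtain a b where ab: "x = (a, b)" by (cases x)
      have aw: "a \<in> words n" and bw: "b \<in> words n" using x ab by (auto simp: DA_def DB_def Dset_def)
      define d where "d = (\<lambda>i. VR (b i) (a i - b i))"
      have dw: "d \<in> words n" using aw bw by (auto simp: words_def d_def vr_zero)
      have Fd: "F d = (a, b)" by (simp add: F_def d_def)
      have "d \<in> dual_code n C" unfolding dual_char using dw x ab by (simp add: d_def)
      then show "x \<in> F ` dual_code n C" unfolding ab by (rule image_eqI[where f=F and x=d, OF Fd[symmetric]])
    qed
  qed
  have card: "card (dual_code n C) = p ^ (degree g1 + degree g2)"
    using card_image[OF injF] imF card_cartesian_product[of DA DB] DA DB p(3)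
    by (simp add: power_add)
  have P3: "gray \<theta> n ` T \<subseteq> quot_ideal_gen (monom 1 (2 * n) - 1) {?h1s * ?h2s}"
  proof
    fix G assume "G \<in> gray \<theta> n ` T"
    then obtain f where fT: "f \<in> T" and G: "G = gray \<theta> n f" by blast
    define a where "a = pA f"
    define b where "b = pB f"
    obtain u1 where u1: "a = ?h1s * u1" using fT by (auto simp: T_def a_def elim!: dvdE)
    obtain u2 where u2: "b = ?h2s * u2" using fT by (auto simp: T_def b_def elim!: dvdE)
    have df: "degree f < n" using fT by (simp add: T_def)
    define X where "X = monom (1::'a) n"
    define E where "E = monom (1::'a) (2 * n) - 1"
    have q: "map_poly vr_q f = a - b"
      by (rule poly_eqI) (simp add: a_def b_def coeff_pA coeff_pB coeff_map_poly hA_def)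
    have r: "map_poly vr_r f = b" by (simp add: b_def pB_def)
    have G': "G = smult (l * c1) (a - b) + X * (smult (- vr_q \<theta>) b - smult c1 (a - b))"
      unfolding G gray_def Let_def q r X_def l_def c1_def by simp
    have G2: "G = smult c1 a * ([:l:] - X) + smult l b * (X - [:c1:])"
      unfolding G' c1_def l_def by (simp add: algebra_simps smult_add_left smult_diff_right)
    have rd2': "?h2s dvd monom 1 n - [:inverse l:]" using rd2 hBv by simp
    have rd1': "?h1s dvd monom 1 n - [:inverse c1:]" using rd1 hAv by simp
    obtain s2 t2 where st2: "[:l:] - X = s2 * ?h2s + t2 * E"
      using comb[OF lnz rd2'] unfolding X_def E_def by blast
    obtain s1 t1 where st1: "[:c1:] - X = s1 * ?h1s + t1 * E"
      using comb[OF c1nz rd1'] unfolding X_def E_def by blast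
    have X1: "X - [:c1:] = - (s1 * ?h1s + t1 * E)" using st1 by (metis minus_diff_eq)
    have G3: "G = (smult c1 (u1 * s2) - smult l (u2 * s1)) * (?h1s * ?h2s)
                 + (smult c1 (?h1s * u1 * t2) - smult l (?h2s * u2 * t1)) * E"
      unfolding G2 X1 st2 u1 u2 by (simp add: algebra_simps)
    have dG: "degree G < 2 * n"
    proof -
      have da: "degree a < n" using dpA[OF n df] by (simp add: a_def)
      have db: "degree b < n" using dpB[OF n df] by (simp add: b_def)
      have dab: "degree (a - b) < n" using da db degree_diff_le_max[of a b] by linarith
      have d1: "degree (smult (l * c1) (a - b)) < n" using dab degree_smult_le[of "l * c1" "a - b"] by linarith
      have "degree (smult (- vr_q \<theta>) b - smult c1 (a - b)) < n"
        using db dab degree_smult_le[of "- vr_q \<theta>" b] degree_smult_le[of c1 "a - b"]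
          degree_diff_le_max[of "smult (- vr_q \<theta>) b" "smult c1 (a - b)"] by linarith
      then have d2: "degree (X * (smult (- vr_q \<theta>) b - smult c1 (a - b))) < 2 * n"
        using degree_mult_le[of X "smult (- vr_q \<theta>) b - smult c1 (a - b)"] degree_monom_le[of "1::'a" n]
        unfolding X_def by linarith
      show ?thesis unfolding G' using d1 d2 degree_add_le_max[of "smult (l * c1) (a - b)" "X * (smult (- vr_q \<theta>) b - smult c1 (a - b))"]
        by linarith
    qed
    have dE: "degree (monom (1::'a) (2 * n) - 1) = 2 * n"
      using degree_xn_c[of "2 * n" "1::'a"] n by (simp add: one_pCons)
    show "G \<in> quot_ideal_gen (monom 1 (2 * n) - 1) {?h1s * ?h2s}"
      unfolding quot_ideal_gen_def dE using dG G3 unfolding E_def by auto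
  qed
  show ?thesis using P1 P2 card P3 polyDual by simp
qed

end
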